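(* Let $\Phi$ be a symbol of the form $\Phi(s)=c_0s+\phi(s)$ (with $c_0$ a non-negative integer and $\phi$ a convergent Dirichlet series) such that $D_\Phi f=f'\circ\Phi$ is a bounded operator on $\mathcal{H}^2$. Then $D_\Phi$ is self-adjoint on $\mathcal{H}^2$ if, and only if, $\Phi(s)=s+c_1$ for some real constant $c_1$.
   Context: $\mathcal{H}^2$ is the Hilbert space of Dirichlet series $f(s)=\sum_{n\ge1}a_nn^{-s}$ with $\|f\|_{\mathcal{H}^2}^2=\sum_n|a_n|^2<\infty$, with inner product $\langle f,g\rangle=\sum a_n\overline{b_n}$. *)

theory Defs
  imports "HOL-Analysis.Analysis"
begin

text \<open>A Dirichlet series sum_{n>=1} a_n n^{-s} is represented by its coefficient
  sequence a :: nat => complex; the coefficient a 0 plays no role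
  (note 0 powr z = 0).\<close>

definition H2 :: "(nat \<Rightarrow> complex) set" where
  "H2 = {a. a 0 = 0 \<and> summable (\<lambda>n. (cmod (a n))\<^sup>2)}"

definition h2_norm :: "(nat \<Rightarrow> complex) \<Rightarrow> real" where
  "h2_norm a = sqrt (\<Sum>n. (cmod (a n))\<^sup>2)"

definition h2_inner :: "(nat \<Rightarrow> complex) \<Rightarrow> (nat \<Rightarrow> complex) \<Rightarrow> complex" where
  "h2_inner a b = (\<Sum>n. a n * cnj (b n))"

definition dir_series :: "(nat \<Rightarrow> complex) \<Rightarrow> complex \<Rightarrow> complex" where
  "dir_series a s = (\<Sum>n. a n * of_nat n powr (- s))"

definition convergent_dirichlet :: "(nat \<Rightarrow> complex) \<Rightarrow> bool" where
  "convergent_dirichlet b \<longleftrightarrow>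
     (\<exists>\<sigma>::real. \<forall>s. Re s > \<sigma> \<longrightarrow> summable (\<lambda>n. b n * of_nat n powr (- s)))"

definition Phi :: "nat \<Rightarrow> (nat \<Rightarrow> complex) \<Rightarrow> complex \<Rightarrow> complex" where
  "Phi c0 b s = of_nat c0 * s + dir_series b s"

text \<open>g represents f' o Phi: they agree on some right half-plane
  (on which Phi takes values in the half-plane Re > 1/2 where f is defined).\<close>
definition represents_DPhi ::
  "(complex \<Rightarrow> complex) \<Rightarrow> (nat \<Rightarrow> complex) \<Rightarrow> (nat \<Rightarrow> complex) \<Rightarrow> bool" where
  "represents_DPhi \<Phi> f g \<longleftrightarrow>
     (\<exists>\<sigma>::real. \<forall>s. Re s > \<sigma> \<longrightarrow>
        Re (\<Phi> s) > 1/2 \<and> dir_series g s = deriv (dir_series f) (\<Phi> s))"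

definition DPhi :: "(complex \<Rightarrow> complex) \<Rightarrow> (nat \<Rightarrow> complex) \<Rightarrow> (nat \<Rightarrow> complex)" where
  "DPhi \<Phi> f = (THE g. g \<in> H2 \<and> represents_DPhi \<Phi> f g)"

definition DPhi_bounded :: "(complex \<Rightarrow> complex) \<Rightarrow> bool" where
  "DPhi_bounded \<Phi> \<longleftrightarrow>
     (\<exists>C::real. \<forall>f\<in>H2. \<exists>g\<in>H2. represents_DPhi \<Phi> f g \<and> h2_norm g \<le> C * h2_norm f)"

definition DPhi_selfadjoint :: "(complex \<Rightarrow> complex) \<Rightarrow> bool" where
  "DPhi_selfadjoint \<Phi> \<longleftrightarrow>
     (\<forall>f\<in>H2. \<forall>g\<in>H2. h2_inner (DPhi \<Phi> f) g = h2_inner f (DPhi \<Phi> g))"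

end

theory Submission
  imports Defs
begin




lemma int_log_pos:
  fixes p q :: int assumes "of_int p * ln 3 = of_int q * ln (2::real)" "p > 0"
  shows False
proof -
  have "of_int q * ln (2::real) > 0" using assms by (simp flip: assms(1))
  hence q: "q > 0" by (smt (verit) ln_gt_zero mult_nonpos_nonneg of_int_le_0_iff)
  define P where "P = nat p" define Q where "Q = nat q"
  have "ln ((3::real)^P) = ln ((2::real)^Q)"
    using assms(1) assms(2) q by (simp add: ln_realpow P_def Q_def)
  hence "(3::real)^P = 2^Q" by (simp add: ln_inj_iff)
  hence "(3::nat)^P = 2^Q" by (metis of_nat_eq_iff of_nat_numeral of_nat_power)
  moreover have "Q > 0" using q Q_def by simp
  ultimately have "even ((3::nat)^P)" by simp
  thus False by simp
qed

lemma int_log_lemma: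
  fixes p q :: int assumes "of_int p * ln 3 = of_int q * ln (2::real)"
  shows "p = 0"
proof (rule ccontr)
  assume "p \<noteq> 0"
  then consider "p > 0" | "p < 0" by linarith
  thus False
  proof cases
    case 1 thus ?thesis using int_log_pos assms by blast
  next
    case 2 thus ?thesis using int_log_pos[of "-p" "-q"] assms by simp
  qed
qed

lemma cpow_real: "(of_nat n :: complex) powr (of_real s) = of_real (real n powr s)"
  using powr_of_real[of "real n" s] by simp

lemma real_pow_lt1_lim:
  fixes c :: real assumes "0 < c" "c < 1"
  shows "((\<lambda>s. c powr s) \<longlongrightarrow> 0) at_top"
  using assms by real_asymp

lemma dir_real: "dir_series a (of_real s) = (\<Sum>n. a n * of_real (real n powr (-s)))"
  unfolding dir_series_def by (metis cpow_real of_real_minus)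

lemma dir_summable:
  fixes a :: "nat \<Rightarrow> complex"
  assumes bnd: "\<forall>n\<ge>1. norm (a n) \<le> B * real n powr \<alpha>" and s: "s > \<alpha> + 1"
  shows "summable (\<lambda>n. a n * of_real (real n powr (-s)))"
proof (rule summable_comparison_test)
  show "summable (\<lambda>n. B * real n powr (\<alpha> - s))"
    using s by (intro summable_mult) (simp add: summable_real_powr_iff)
  show "\<exists>N. \<forall>n\<ge>N. norm (a n * of_real (real n powr (-s))) \<le> B * real n powr (\<alpha> - s)"
  proof (intro exI[of _ 1] allI impI)
    fix n :: nat assume "n \<ge> 1"
    have "norm (a n * of_real (real n powr (-s))) = norm (a n) * real n powr (-s)"
      by (simp add: norm_mult)
    also have "\<dots> \<le> B * real n powr \<alpha> * real n powr (-s)"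
      using bnd \<open>n\<ge>1\<close> by (intro mult_right_mono) auto
    also have "\<dots> = B * real n powr (\<alpha> - s)" by (simp add: powr_add[symmetric])
    finally show "norm (a n * of_real (real n powr (-s))) \<le> B * real n powr (\<alpha> - s)" .
  qed
qed

lemma coeff_lim:
  fixes a :: "nat \<Rightarrow> complex" and B \<alpha> :: real and K :: nat
  assumes bnd: "\<forall>n\<ge>1. norm (a n) \<le> B * real n powr \<alpha>" and K: "K \<ge> 1"
    and zero: "\<forall>n. 1 \<le> n \<longrightarrow> n < K \<longrightarrow> a n = 0"
  shows "((\<lambda>s. of_real (real K powr s) * dir_series a (of_real s)) \<longlongrightarrow> a K) at_top"
proof -
  define F where "F k s = a k * of_real ((real K / real k) powr s)" for k s
  have B0: "B \<ge> 0" using bnd[rule_format, of 1] norm_ge_zero[of "a 1"] by (metis One_nat_def le_numeral_extra(4) mult.right_neutral of_nat_1 order_trans powr_one_eq_one)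
  have eq: "of_real (real K powr s) * dir_series a (of_real s) = (\<Sum>k. F k s)" if s: "s > \<alpha> + 1" for s
  proof -
    have "of_real (real K powr s) * dir_series a (of_real s)
        = (\<Sum>k. of_real (real K powr s) * (a k * of_real (real k powr (-s))))"
      unfolding dir_real using dir_summable[OF bnd s] by (simp add: suminf_mult)
    also have "\<dots> = (\<Sum>k. F k s)"
    proof (rule suminf_cong)
      fix k
      show "of_real (real K powr s) * (a k * of_real (real k powr (-s))) = F k s"
        unfolding F_def
        by (cases "k = 0") (simp_all add: powr_divide powr_minus field_simps)
    qed
    finally show ?thesis .
  qed
  define b where "b k = (if k = K then a K else 0)" for k
  have lim: "((\<lambda>s. F k s) \<longlongrightarrow> b k) at_top" for k
  proof (cases "k > K")
    case True
    have "((\<lambda>s. (real K / real k) powr s) \<longlongrightarrow> 0) at_top"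
      using K True by (intro real_pow_lt1_lim) auto
    hence "((\<lambda>s. a k * of_real ((real K / real k) powr s)) \<longlongrightarrow> a k * of_real 0) at_top"
      by (intro tendsto_intros) auto
    thus ?thesis using True by (simp add: F_def b_def)
  next
    case False
    then consider "k = K" | "k = 0" | "1 \<le> k \<and> k < K" by linarith
    thus ?thesis
    proof cases
      case 1 thus ?thesis using K by (simp add: F_def b_def)
    next
      case 2 thus ?thesis using K by (simp add: F_def b_def)
    next
      case 3 thus ?thesis using zero by (simp add: F_def b_def)
    qed
  qed
  define M where "M k = B * real K powr (\<alpha> + 2) * real k powr (-2)" for k
  have bound: "eventually (\<lambda>(k,s). norm (F k s) \<le> M k) (at_top \<times>\<^sub>F at_top)"
    unfolding eventually_prod_filter
  proof (intro exI conjI allI impI)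
    show "eventually (\<lambda>k. k > K) at_top" by (rule eventually_gt_at_top)
    show "eventually (\<lambda>s. s \<ge> \<alpha> + 2) at_top" by (rule eventually_ge_at_top)
    fix k s assume k: "k > K" and s: "s \<ge> \<alpha> + 2"
    have k1: "k \<ge> 1" using k K by simp
    have q: "0 \<le> real K / real k" "real K / real k \<le> 1" using k by auto
    have "norm (F k s) = norm (a k) * (real K / real k) powr s"
      by (simp add: F_def norm_mult)
    also have "\<dots> \<le> B * real k powr \<alpha> * (real K / real k) powr (\<alpha> + 2)"
      using bnd k1 q s B0 by (intro mult_mono powr_mono') auto
    also have "\<dots> = M k"
      using k K unfolding M_def
      by (simp add: powr_divide powr_minus powr_diff powr_add field_simps)
    finally show "(case (k, s) of (k, s) \<Rightarrow> norm (F k s) \<le> M k)" by simp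
  qed
  have sM: "summable M" unfolding M_def by (intro summable_mult) (simp add: summable_real_powr_iff)
  have "((\<lambda>s. \<Sum>k. F k s) \<longlongrightarrow> suminf b) at_top"
    using tannerys_theorem[OF lim bound sM] by simp
  moreover have "suminf b = a K" unfolding b_def using sums_unique[OF sums_single[of K "\<lambda>_. a K"]] by simp
  ultimately have "((\<lambda>s. \<Sum>k. F k s) \<longlongrightarrow> a K) at_top" by simp
  moreover have "eventually (\<lambda>s. (\<Sum>k. F k s) = of_real (real K powr s) * dir_series a (of_real s)) at_top"
    using eventually_gt_at_top[of "\<alpha> + 1"] by eventually_elim (simp add: eq)
  ultimately show ?thesis by (rule Lim_transform_eventually)
qed

lemma coeff_zero:
  fixes a :: "nat \<Rightarrow> complex" and B \<alpha> :: real and K :: nat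
  assumes bnd: "\<forall>n\<ge>1. norm (a n) \<le> B * real n powr \<alpha>" and K: "K \<ge> 1"
    and lim: "((\<lambda>s. of_real (real K powr s) * dir_series a (of_real s)) \<longlongrightarrow> L) at_top"
  shows "\<forall>n. 1 \<le> n \<longrightarrow> n < K \<longrightarrow> a n = 0"
proof -
  { fix n :: nat have "1 \<le> n \<Longrightarrow> n < K \<Longrightarrow> a n = 0"
    proof (induction n rule: less_induct)
      case (less n)
      have z: "\<forall>m. 1 \<le> m \<longrightarrow> m < n \<longrightarrow> a m = 0" using less.IH less.prems by auto
      have l1: "((\<lambda>s. of_real (real n powr s) * dir_series a (of_real s)) \<longlongrightarrow> a n) at_top"
        using coeff_lim[OF bnd _ z] less.prems by simp
      have "((\<lambda>s. (real n / real K) powr s) \<longlongrightarrow> 0) at_top"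
        using less.prems by (intro real_pow_lt1_lim) auto
      hence l2: "((\<lambda>s. of_real ((real n / real K) powr s) * (of_real (real K powr s) * dir_series a (of_real s))) \<longlongrightarrow> of_real 0 * L) at_top"
        by (intro tendsto_intros lim)
      have "(\<lambda>s. of_real ((real n / real K) powr s) * (of_real (real K powr s) * dir_series a (of_real s)))
          = (\<lambda>s. of_real (real n powr s) * dir_series a (of_real s))"
        using K by (auto simp: powr_divide)
      with l2 have "((\<lambda>s. of_real (real n powr s) * dir_series a (of_real s)) \<longlongrightarrow> 0) at_top" by simp
      from tendsto_unique[OF _ l1 this] show ?case by simp
    qed }
  thus ?thesis by blast
qed

lemma coeff_val:
  fixes a :: "nat \<Rightarrow> complex" and B \<alpha> :: real and K :: nat
  assumes bnd: "\<forall>n\<ge>1. norm (a n) \<le> B * real n powr \<alpha>" and K: "K \<ge> 1"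
    and lim: "((\<lambda>s. of_real (real K powr s) * dir_series a (of_real s)) \<longlongrightarrow> L) at_top"
  shows "a K = L"
  using tendsto_unique[OF _ coeff_lim[OF bnd K coeff_zero[OF bnd K lim]] lim] by simp


definition pb :: "(nat \<Rightarrow> complex) \<Rightarrow> bool" where
  "pb a \<longleftrightarrow> (\<exists>B \<alpha>. \<forall>n\<ge>1. norm (a n) \<le> B * real n powr \<alpha>)"

lemma pb_B0: "\<forall>n\<ge>1. norm (a n) \<le> B * real n powr \<alpha> \<Longrightarrow> B \<ge> 0"
  using norm_ge_zero[of "a 1"]
  by (metis One_nat_def le_numeral_extra(4) mult.right_neutral of_nat_1 order_trans powr_one_eq_one)

lemma pb_diff:
  assumes "pb a" "pb b" shows "pb (\<lambda>n. a n - b n)"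
proof -
  obtain B1 \<alpha>1 where 1: "\<forall>n\<ge>1. norm (a n) \<le> B1 * real n powr \<alpha>1" using assms unfolding pb_def by blast
  obtain B2 \<alpha>2 where 2: "\<forall>n\<ge>1. norm (b n) \<le> B2 * real n powr \<alpha>2" using assms unfolding pb_def by blast
  have B: "B1 \<ge> 0" "B2 \<ge> 0" using pb_B0 1 2 by auto
  have "\<forall>n\<ge>1. norm (a n - b n) \<le> (B1 + B2) * real n powr (max \<alpha>1 \<alpha>2)"
  proof (intro allI impI)
    fix n :: nat assume n: "n \<ge> 1"
    have "norm (a n - b n) \<le> norm (a n) + norm (b n)" by (rule norm_triangle_ineq4)
    also have "\<dots> \<le> B1 * real n powr \<alpha>1 + B2 * real n powr \<alpha>2" using 1 2 n by (intro add_mono) auto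
    also have "\<dots> \<le> B1 * real n powr (max \<alpha>1 \<alpha>2) + B2 * real n powr (max \<alpha>1 \<alpha>2)"
      using n B by (intro add_mono mult_left_mono powr_mono) auto
    finally show "norm (a n - b n) \<le> (B1 + B2) * real n powr (max \<alpha>1 \<alpha>2)" by (simp add: algebra_simps)
  qed
  thus ?thesis unfolding pb_def by blast
qed

lemma dir_unique:
  assumes "pb a" "pb b"
    and ev: "eventually (\<lambda>s. dir_series a (of_real s) = dir_series b (of_real s)) at_top"
  shows "\<forall>n\<ge>1. a n = b n"
proof (intro allI impI)
  fix K :: nat assume K: "K \<ge> 1"
  obtain B1 \<alpha>1 where 1: "\<forall>n\<ge>1. norm (a n) \<le> B1 * real n powr \<alpha>1" using assms unfolding pb_def by blast
  obtain B2 \<alpha>2 where 2: "\<forall>n\<ge>1. norm (b n) \<le> B2 * real n powr \<alpha>2" using assms unfolding pb_def by blast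
  obtain B \<alpha> where 3: "\<forall>n\<ge>1. norm (a n - b n) \<le> B * real n powr \<alpha>"
    using pb_diff[OF assms(1,2)] unfolding pb_def by blast
  have "eventually (\<lambda>s. of_real (real K powr s) * dir_series (\<lambda>n. a n - b n) (of_real s) = 0) at_top"
    using ev eventually_gt_at_top[of "max \<alpha>1 \<alpha>2 + 1"]
  proof eventually_elim
    case (elim s)
    have "dir_series (\<lambda>n. a n - b n) (of_real s) = dir_series a (of_real s) - dir_series b (of_real s)"
      unfolding dir_real
      using suminf_diff[OF dir_summable[OF 1, of s] dir_summable[OF 2, of s]] elim
      by (simp add: algebra_simps)
    thus ?case using elim by simp
  qed
  hence "((\<lambda>s. of_real (real K powr s) * dir_series (\<lambda>n. a n - b n) (of_real s)) \<longlongrightarrow> 0) at_top"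
    by (rule Lim_transform_eventually[OF tendsto_const, OF eventually_mono]) auto
  from coeff_val[OF 3 K this] show "a K = b K" by simp
qed




lemma H2_pb: assumes "a \<in> H2" shows "\<forall>n\<ge>1. norm (a n) \<le> sqrt (\<Sum>n. (cmod (a n))\<^sup>2) * real n powr 0"
proof (intro allI impI)
  fix n :: nat assume n: "n \<ge> 1"
  have s: "summable (\<lambda>n. (cmod (a n))\<^sup>2)" using assms by (simp add: H2_def)
  have "(cmod (a n))\<^sup>2 \<le> (\<Sum>n. (cmod (a n))\<^sup>2)"
    using sum_le_suminf[OF s, of "{n}"] by simp
  hence "cmod (a n) \<le> sqrt (\<Sum>n. (cmod (a n))\<^sup>2)" by (simp add: real_le_rsqrt)
  thus "norm (a n) \<le> sqrt (\<Sum>n. (cmod (a n))\<^sup>2) * real n powr 0" using n by simp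
qed

lemma H2_pb': "a \<in> H2 \<Longrightarrow> pb a" unfolding pb_def using H2_pb by blast

lemma represents_ev:
  assumes "represents_DPhi \<Phi> f g"
  shows "eventually (\<lambda>s. dir_series g (of_real s) = deriv (dir_series f) (\<Phi> (of_real s))) at_top"
proof -
  obtain \<sigma> where H: "\<forall>s. Re s > \<sigma> \<longrightarrow> Re (\<Phi> s) > 1/2 \<and> dir_series g s = deriv (dir_series f) (\<Phi> s)"
    using assms unfolding represents_DPhi_def by blast
  show ?thesis using eventually_gt_at_top[of \<sigma>]
  proof eventually_elim
    case (elim s) thus ?case using H[rule_format, of "of_real s"] by simp
  qed
qed

lemma H2_unique:
  assumes "g1 \<in> H2" "g2 \<in> H2" "represents_DPhi \<Phi> f g1" "represents_DPhi \<Phi> f g2"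
  shows "g1 = g2"
proof
  fix n
  have ev: "eventually (\<lambda>s. dir_series g1 (of_real s) = dir_series g2 (of_real s)) at_top"
    using represents_ev[OF assms(3)] represents_ev[OF assms(4)] by eventually_elim simp
  show "g1 n = g2 n"
  proof (cases "n = 0")
    case True thus ?thesis using assms by (simp add: H2_def)
  next
    case False thus ?thesis using dir_unique[OF H2_pb' H2_pb' ev] assms by simp
  qed
qed

lemma DPhi_spec:
  assumes "DPhi_bounded \<Phi>" "f \<in> H2"
  shows "DPhi \<Phi> f \<in> H2 \<and> represents_DPhi \<Phi> f (DPhi \<Phi> f)"
proof -
  obtain g where g: "g \<in> H2" "represents_DPhi \<Phi> f g" using assms unfolding DPhi_bounded_def by blast
  have "\<exists>!g. g \<in> H2 \<and> represents_DPhi \<Phi> f g" using g H2_unique by blast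
  thus ?thesis unfolding DPhi_def by (rule theI')
qed

definition ee :: "nat \<Rightarrow> nat \<Rightarrow> complex" where "ee m = (\<lambda>n. if n = m then 1 else 0)"

lemma ee_H2: "m \<ge> 1 \<Longrightarrow> ee m \<in> H2"
proof -
  assume m: "m \<ge> 1"
  have "summable (\<lambda>n. (cmod (ee m n))\<^sup>2)"
    by (rule summable_finite[of "{m}"]) (auto simp: ee_def)
  thus ?thesis using m by (simp add: H2_def ee_def)
qed

lemma suminf_single': "(\<Sum>n. if n = m then x else (0::'a::{t2_space,comm_monoid_add,topological_comm_monoid_add})) = x"
  using sums_unique[OF sums_single[of m "\<lambda>_. x"]] by simp

lemma inner_ee_right: "h2_inner x (ee k) = x k"
proof -
  have "(\<lambda>n. x n * cnj (ee k n)) = (\<lambda>n. if n = k then x k else 0)" by (auto simp: ee_def)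
  thus ?thesis unfolding h2_inner_def by (simp add: suminf_single')
qed

lemma inner_ee_left: "h2_inner (ee m) y = cnj (y m)"
proof -
  have "(\<lambda>n. ee m n * cnj (y n)) = (\<lambda>n. if n = m then cnj (y m) else 0)" by (auto simp: ee_def)
  thus ?thesis unfolding h2_inner_def by (simp add: suminf_single')
qed

lemma dir_ee: "m \<ge> 1 \<Longrightarrow> dir_series (ee m) = (\<lambda>z. exp (- z * of_real (ln (real m))))"
proof
  fix z assume m: "m \<ge> 1"
  have "(\<lambda>n. ee m n * of_nat n powr (- z)) = (\<lambda>n. if n = m then of_nat m powr (-z) else 0)"
    by (auto simp: ee_def)
  thus "dir_series (ee m) z = exp (- z * of_real (ln (real m)))"
    unfolding dir_series_def using m by (simp add: suminf_single' powr_def)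
qed

lemma deriv_ee: "m \<ge> 1 \<Longrightarrow> deriv (dir_series (ee m)) w = - of_real (ln (real m)) * exp (- w * of_real (ln (real m)))"
proof -
  assume m: "m \<ge> 1"
  have "((\<lambda>z. exp (- z * of_real (ln (real m)))) has_field_derivative
          exp (- w * of_real (ln (real m))) * (- of_real (ln (real m)))) (at w)"
    by (auto intro!: derivative_eq_intros)
  from DERIV_imp_deriv[OF this] show ?thesis using m by (simp add: dir_ee mult.commute)
qed

lemma dir_single: "dir_series (\<lambda>n. if n = m then c else 0) z = c * of_nat m powr (-z)"
proof -
  have "(\<lambda>n. (if n = m then c else 0) * of_nat n powr (- z)) = (\<lambda>n. if n = m then c * of_nat m powr (-z) else 0)"
    by auto
  thus ?thesis unfolding dir_series_def by (simp add: suminf_single')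
qed




lemma conv_pb: assumes "convergent_dirichlet b" shows "pb b"
proof -
  obtain \<sigma> where H: "\<forall>s. Re s > \<sigma> \<longrightarrow> summable (\<lambda>n. b n * of_nat n powr (- s))"
    using assms unfolding convergent_dirichlet_def by blast
  define s0 where "s0 = \<sigma> + 1"
  have "summable (\<lambda>n. b n * of_nat n powr (- of_real s0))" using H[rule_format, of "of_real s0"] s0_def by simp
  moreover have "(\<lambda>n. b n * of_nat n powr (- of_real s0)) = (\<lambda>n. b n * of_real (real n powr (- s0)))"
    using cpow_real[of _ "- s0"] by simp
  ultimately have "summable (\<lambda>n. b n * of_real (real n powr (- s0)))" by simp
  hence "(\<lambda>n. b n * of_real (real n powr (- s0))) \<longlonglongrightarrow> 0"
    by (rule summable_LIMSEQ_zero)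
  hence "Bseq (\<lambda>n. b n * of_real (real n powr (- s0)))" by (intro convergent_imp_Bseq convergentI)
  then obtain C where C: "\<forall>n. norm (b n * of_real (real n powr (- s0))) \<le> C" unfolding Bseq_def by blast
  have "\<forall>n\<ge>1. norm (b n) \<le> C * real n powr s0"
  proof (intro allI impI)
    fix n :: nat assume n: "n \<ge> 1"
    have e1: "norm (b n * of_real (real n powr (- s0))) = norm (b n) * real n powr (- s0)"
      by (simp add: norm_mult)
    have e2: "real n powr (- s0) * real n powr s0 = 1" using n by (simp add: powr_add[symmetric])
    have "norm (b n) = norm (b n * of_real (real n powr (- s0))) * real n powr s0"
      unfolding e1 using e2 by (simp add: mult.assoc)
    also have "\<dots> \<le> C * real n powr s0" using C by (intro mult_right_mono) auto
    finally show "norm (b n) \<le> C * real n powr s0" .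
  qed
  thus ?thesis unfolding pb_def by blast
qed

lemma phi_lim: assumes "pb b" shows "((\<lambda>s. dir_series b (of_real s)) \<longlongrightarrow> b 1) at_top"
proof -
  obtain B \<alpha> where 1: "\<forall>n\<ge>1. norm (b n) \<le> B * real n powr \<alpha>" using assms unfolding pb_def by blast
  from coeff_lim[OF 1, of 1] show ?thesis by simp
qed

lemma real_pow_exp: "m \<ge> 1 \<Longrightarrow> complex_of_real (real (m ^ c) powr s) = exp (of_real s * of_nat c * of_real (ln (real m)))"
proof -
  assume m: "m \<ge> 1"
  have "real (m^c) powr s = exp (s * (real c * ln (real m)))" using m by (simp add: powr_def ln_realpow)
  hence "complex_of_real (real (m ^ c) powr s) = exp (of_real (s * (real c * ln (real m))))"
    by (simp only: exp_of_real)
  thus ?thesis by (simp add: mult_ac)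
qed

lemma two_three:
  fixes t c :: real and p q :: int
  assumes "t * ln 2 = of_int p * c" "t * ln 3 = of_int q * c" "c \<noteq> 0"
  shows "t = 0"
proof -
  have "of_int p * c * ln 3 = t * ln 2 * ln 3" using assms(1) by simp
  also have "\<dots> = t * ln 3 * ln 2" by (simp only: mult.assoc mult.commute[of "ln 2"])
  also have "\<dots> = of_int q * c * ln 2" using assms(2) by simp
  finally have "of_int p * c * ln 3 = of_int q * c * ln 2" .
  hence "of_int p * ln 3 = of_int q * ln (2::real)" using assms(3) by (simp add: mult_ac)
  hence "p = 0" by (rule int_log_lemma)
  thus ?thesis using assms(1) by simp
qed


lemma forward:
  fixes c0 :: nat and b :: "nat \<Rightarrow> complex"
  assumes conv: "convergent_dirichlet b" and bdd: "DPhi_bounded (Phi c0 b)"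
    and sa: "DPhi_selfadjoint (Phi c0 b)"
  shows "\<exists>c1::real. \<exists>\<sigma>::real. \<forall>s. Re s > \<sigma> \<longrightarrow> Phi c0 b s = s + of_real c1"
proof -
  define \<Phi> where "\<Phi> = Phi c0 b"
  define g where "g m = DPhi \<Phi> (ee m)" for m
  define L where "L m = complex_of_real (ln (real m))" for m :: nat
  define lam where "lam m = - L m * exp (- b 1 * L m)" for m
  have gH2: "g m \<in> H2" and grep: "represents_DPhi \<Phi> (ee m) (g m)" if "m \<ge> 1" for m
    using DPhi_spec[OF bdd[folded \<Phi>_def] ee_H2[OF that]] g_def by auto
  have gfun: "\<exists>\<sigma>. \<forall>s. Re s > \<sigma> \<longrightarrow> dir_series (g m) s = - L m * exp (- \<Phi> s * L m)" if m: "m \<ge> 1" for m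
  proof -
    obtain \<sigma> where H: "\<forall>s. Re s > \<sigma> \<longrightarrow> Re (\<Phi> s) > 1/2 \<and> dir_series (g m) s = deriv (dir_series (ee m)) (\<Phi> s)"
      using grep[OF m] unfolding represents_DPhi_def by blast
    thus ?thesis using deriv_ee[OF m] unfolding L_def by auto
  qed
  have gbnd: "\<forall>n\<ge>1. norm (g m n) \<le> sqrt (\<Sum>n. (cmod (g m n))\<^sup>2) * real n powr 0" if "m \<ge> 1" for m
    using H2_pb[OF gH2[OF that]] .
  have sym: "g m k = cnj (g k m)" if "m \<ge> 1" "k \<ge> 1" for m k
  proof -
    have "h2_inner (DPhi \<Phi> (ee m)) (ee k) = h2_inner (ee m) (DPhi \<Phi> (ee k))"
      using sa ee_H2 that unfolding DPhi_selfadjoint_def \<Phi>_def by blast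
    thus ?thesis unfolding inner_ee_left inner_ee_right g_def .
  qed
  have pbb: "pb b" by (rule conv_pb[OF conv])
  have glim: "((\<lambda>s. of_real (real (m^c0) powr s) * dir_series (g m) (of_real s)) \<longlongrightarrow> lam m) at_top"
    if m: "m \<ge> 1" for m
  proof -
    obtain \<sigma> where H: "\<forall>s. Re s > \<sigma> \<longrightarrow> dir_series (g m) s = - L m * exp (- \<Phi> s * L m)"
      using gfun[OF m] by blast
    have lim1: "((\<lambda>s. - L m * exp (- dir_series b (of_real s) * L m)) \<longlongrightarrow> lam m) at_top"
      unfolding lam_def by (intro tendsto_intros phi_lim[OF pbb])
    have ev: "eventually (\<lambda>s. - L m * exp (- dir_series b (of_real s) * L m)
          = of_real (real (m^c0) powr s) * dir_series (g m) (of_real s)) at_top"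
      using eventually_gt_at_top[of \<sigma>]
    proof eventually_elim
      case (elim s)
      have "of_real (real (m^c0) powr s) * dir_series (g m) (of_real s)
          = exp (of_real s * of_nat c0 * L m) * (- L m * exp (- (of_nat c0 * of_real s + dir_series b (of_real s)) * L m))"
        using H elim real_pow_exp[OF m, of c0 s] unfolding L_def \<Phi>_def Phi_def by simp
      also have "\<dots> = - L m * (exp (of_real s * of_nat c0 * L m) * exp (- (of_nat c0 * of_real s + dir_series b (of_real s)) * L m))"
        by (simp add: mult_ac)
      also have "\<dots> = - L m * exp (of_real s * of_nat c0 * L m + (- (of_nat c0 * of_real s + dir_series b (of_real s)) * L m))"
        by (simp add: exp_add)
      also have "of_real s * of_nat c0 * L m + (- (of_nat c0 * of_real s + dir_series b (of_real s)) * L m)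
          = - dir_series b (of_real s) * L m" by (simp add: algebra_simps)
      finally show ?case by simp
    qed
    show ?thesis by (rule Lim_transform_eventually[OF lim1 ev])
  qed
  have gzero: "g m n = 0" if "m \<ge> 1" "1 \<le> n" "n < m^c0" for m n
    using coeff_zero[OF gbnd[OF that(1)] _ glim[OF that(1)]] that by simp
  have gval: "g m (m^c0) = lam m" if "m \<ge> 1" for m
    using coeff_val[OF gbnd[OF that] _ glim[OF that]] that by simp
  have g1: "g 1 k = 0" if "k \<ge> 1" for k
  proof -
    obtain \<sigma> where H: "\<forall>s. Re s > \<sigma> \<longrightarrow> dir_series (g 1) s = - L 1 * exp (- \<Phi> s * L 1)"
      using gfun[of 1] by auto
    have "eventually (\<lambda>s. dir_series (g 1) (of_real s) = dir_series (\<lambda>_. 0) (of_real s)) at_top"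
      using eventually_gt_at_top[of \<sigma>]
      by eventually_elim (use H in \<open>simp add: L_def dir_series_def\<close>)
    moreover have "pb (\<lambda>_. 0)" unfolding pb_def by (rule exI[of _ 0]) auto
    ultimately show ?thesis using dir_unique[OF H2_pb'[OF gH2[of 1]]] that by auto
  qed
  have Lnz: "L m \<noteq> 0" if "m \<ge> 2" for m using that unfolding L_def by simp
  have lam_nz: "lam m \<noteq> 0" if "m \<ge> 2" for m using Lnz[OF that] unfolding lam_def by simp
  have c0: "c0 = 1"
  proof (rule ccontr)
    assume "c0 \<noteq> 1"
    then consider "c0 = 0" | "c0 \<ge> 2" by linarith
    thus False
    proof cases
      case 1
      have "g 2 1 = lam 2" using gval[of 2] 1 by simp
      moreover have "g 2 1 = cnj (g 1 2)" using sym[of 2 1] by simp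
      ultimately show False using g1[of 2] lam_nz[of 2] by simp
    next
      case 2
      have "(2::nat)^1 < 2^c0" using 2 by (intro power_strict_increasing) auto
      hence "(2::nat) < 2^c0" by simp
      moreover have "(2::nat)^c0 \<le> (2^c0)^c0" using 2 by (intro self_le_power) auto
      ultimately have "(2::nat) < (2^c0)^c0" by linarith
      hence "g (2^c0) 2 = 0" using gzero[of "2^c0" 2] by simp
      moreover have "g 2 (2^c0) = cnj (g (2^c0) 2)" using sym[of 2 "2^c0"] by simp
      ultimately show False using gval[of 2] lam_nz[of 2] by simp
    qed
  qed
  have gsupp: "g m = (\<lambda>n. if n = m then lam m else 0)" if m: "m \<ge> 1" for m
  proof
    fix n
    consider "n = 0" | "n = m" | "1 \<le> n \<and> n < m" | "n > m" by linarith
    thus "g m n = (if n = m then lam m else 0)"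
    proof cases
      case 1 thus ?thesis using gH2[OF m] m by (simp add: H2_def)
    next
      case 2 thus ?thesis using gval[OF m] c0 by simp
    next
      case 3 thus ?thesis using gzero[OF m, of n] c0 by simp
    next
      case 4
      have "g n m = 0" using gzero[of n m] 4 m c0 by simp
      thus ?thesis using sym[OF m, of n] 4 m by simp
    qed
  qed
  have gdir: "dir_series (g m) s = lam m * exp (- s * L m)" if m: "m \<ge> 1" for m s
    using m unfolding gsupp[OF m] dir_single L_def by (simp add: powr_def)
  have key: "\<exists>\<sigma>. \<forall>s. Re s > \<sigma> \<longrightarrow> (\<exists>n::int. (dir_series b s - b 1) * L m = of_int (2 * n) * pi * \<i>)"
    if m: "m \<ge> 2" for m
  proof -
    obtain \<sigma> where H: "\<forall>s. Re s > \<sigma> \<longrightarrow> dir_series (g m) s = - L m * exp (- \<Phi> s * L m)"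
      using gfun[of m] m by auto
    show ?thesis
    proof (rule exI, intro allI impI)
      fix s assume s: "Re s > \<sigma>"
      have "lam m * exp (- s * L m) = - L m * exp (- \<Phi> s * L m)" using H s gdir[of m s] m by simp
      hence "- L m * (exp (- b 1 * L m) * exp (- s * L m)) = - L m * exp (- \<Phi> s * L m)"
        unfolding lam_def by (simp add: mult_ac)
      hence "exp (- b 1 * L m) * exp (- s * L m) = exp (- \<Phi> s * L m)" using Lnz[OF m] by simp
      hence "exp (- \<Phi> s * L m) = exp (- b 1 * L m + - s * L m)"
        using exp_add[of "- b 1 * L m" "- s * L m"] by simp
      then obtain n :: int where "- \<Phi> s * L m = - b 1 * L m + - s * L m + of_int (2 * n) * pi * \<i>"
        unfolding exp_eq by blast
      hence "(dir_series b s - b 1) * L m = of_int (2 * (-n)) * pi * \<i>"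
        using c0 unfolding \<Phi>_def Phi_def by (simp add: algebra_simps)
      thus "\<exists>n::int. (dir_series b s - b 1) * L m = of_int (2 * n) * pi * \<i>" by blast
    qed
  qed
  obtain \<sigma>2 where S2: "\<forall>s. Re s > \<sigma>2 \<longrightarrow> (\<exists>n::int. (dir_series b s - b 1) * L 2 = of_int (2 * n) * pi * \<i>)"
    using key[of 2] by auto
  obtain \<sigma>3 where S3: "\<forall>s. Re s > \<sigma>3 \<longrightarrow> (\<exists>n::int. (dir_series b s - b 1) * L 3 = of_int (2 * n) * pi * \<i>)"
    using key[of 3] by auto
  have phi_const: "dir_series b s = b 1" if s: "Re s > max \<sigma>2 \<sigma>3" for s
  proof -
    define w where "w = dir_series b s - b 1"
    obtain p :: int where p: "w * of_real (ln 2) = of_int (2 * p) * pi * \<i>"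
      using S2 s unfolding w_def L_def by fastforce
    obtain q :: int where q: "w * of_real (ln 3) = of_int (2 * q) * pi * \<i>"
      using S3 s unfolding w_def L_def by fastforce
    have "Re w * ln 2 = 0" using arg_cong[OF p, of Re] by simp
    hence re: "Re w = 0" by simp
    have "Im w * ln 2 = of_int p * (2 * pi)" using arg_cong[OF p, of Im] by simp
    moreover have "Im w * ln 3 = of_int q * (2 * pi)" using arg_cong[OF q, of Im] by simp
    ultimately have "Im w = 0" by (rule two_three) simp
    with re have "w = 0" by (simp add: complex_eq_iff)
    thus ?thesis unfolding w_def by simp
  qed
  have im_pi: "\<exists>i::int. Im (b 1) * ln (real m) = of_int i * pi" if m: "m \<ge> 2" for m :: nat
  proof -
    have "g m m = cnj (g m m)" using sym[of m m] m by simp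
    hence "lam m = cnj (lam m)" using gval[of m] m c0 by simp
    hence "Im (lam m) = Im (cnj (lam m))" by (rule arg_cong)
    hence "Im (lam m) = 0" by simp
    moreover have "ln (real m) > 0" using m by simp
    ultimately have "sin (- Im (b 1) * ln (real m)) = 0"
      unfolding lam_def L_def by (simp add: Im_exp)
    thus ?thesis by (simp add: sin_zero_iff_int2)
  qed
  obtain p :: int where p: "Im (b 1) * ln 2 = of_int p * pi" using im_pi[of 2] by auto
  obtain q :: int where q: "Im (b 1) * ln 3 = of_int q * pi" using im_pi[of 3] by auto
  have "Im (b 1) = 0" by (rule two_three[OF p q]) simp
  hence imb: "b 1 = of_real (Re (b 1))" by (simp add: complex_eq_iff)
  show ?thesis
  proof (intro exI allI impI)
    fix s assume s: "Re s > max \<sigma>2 \<sigma>3"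
    show "Phi c0 b s = s + of_real (Re (b 1))"
      using phi_const[OF s] c0 imb unfolding Phi_def by simp
  qed
qed




lemma norm_npow: "norm ((of_nat n :: complex) powr z) = real n powr Re z"
  using norm_powr_real_powr[of "of_nat n" z] by simp

lemma deriv_dir:
  fixes f :: "nat \<Rightarrow> complex"
  assumes bnd: "\<forall>n\<ge>1. norm (f n) \<le> B" and z: "Re z > 3"
  shows "deriv (dir_series f) z = (\<Sum>n. - f n * of_real (ln (real n)) * of_nat n powr (-z))"
proof -
  define S where "S = {z::complex. Re z > 3}"
  have "norm (f 1) \<le> B" using bnd by simp
  hence B0: "B \<ge> 0" by (rule order_trans[OF norm_ge_zero])
  have oS: "open S" unfolding S_def by (simp add: open_halfspace_Re_gt)
  have cS: "convex S" unfolding S_def by (simp add: convex_halfspace_Re_gt)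
  have der: "((\<lambda>x. f n * of_nat n powr (-x)) has_field_derivative
              - f n * of_real (ln (real n)) * of_nat n powr (-x)) (at x within S)" for n x
  proof (cases "n = 0")
    case True thus ?thesis by simp
  next
    case False
    have "((\<lambda>x. f n * exp (- x * of_real (ln (real n)))) has_field_derivative
              f n * (exp (- x * of_real (ln (real n))) * (- of_real (ln (real n))))) (at x within S)"
      by (auto intro!: derivative_eq_intros)
    thus ?thesis using False by (simp add: powr_def mult_ac)
  qed
  have unif: "uniformly_convergent_on S (\<lambda>n x. \<Sum>i<n. - f i * of_real (ln (real i)) * of_nat i powr (-x))"
  proof (rule Weierstrass_m_test')
    show "summable (\<lambda>n. B * real n powr (-2))" by (intro summable_mult) (simp add: summable_real_powr_iff)
    fix n x assume x: "x \<in> S"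
    show "norm (- f n * of_real (ln (real n)) * of_nat n powr (-x)) \<le> B * real n powr (-2)"
    proof (cases "n = 0")
      case True thus ?thesis by simp
    next
      case False
      have "norm (- f n * of_real (ln (real n)) * of_nat n powr (-x)) = norm (f n) * ln (real n) * real n powr (- Re x)"
        using False by (simp add: norm_mult norm_npow)
      also have "\<dots> \<le> B * real n * real n powr (-3)"
        using bnd False x B0 unfolding S_def
        by (intro mult_mono powr_mono) (auto simp: ln_le_minus_one intro: order_trans[OF ln_le_minus_one])
      also have "\<dots> = B * real n powr (-2)"
        using False by (simp add: powr_add[symmetric] mult.assoc powr_mult_base)
      finally show ?thesis .
    qed
  qed
  have x0: "of_real 4 \<in> S" unfolding S_def by simp
  have sm: "summable (\<lambda>n. f n * of_nat n powr (- of_real 4))"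
    using dir_summable[of f B 0 4] bnd by (simp add: cpow_real[symmetric])
  have zi: "z \<in> interior S" using oS z unfolding S_def by (simp add: interior_open)
  have "((\<lambda>x. \<Sum>n. f n * of_nat n powr (-x)) has_field_derivative
          (\<Sum>n. - f n * of_real (ln (real n)) * of_nat n powr (-z))) (at z)"
    by (rule has_field_derivative_series'(2)[OF cS der unif x0 sm zi])
  hence "(dir_series f has_field_derivative (\<Sum>n. - f n * of_real (ln (real n)) * of_nat n powr (-z))) (at z)"
    unfolding dir_series_def[abs_def] .
  thus ?thesis by (rule DERIV_imp_deriv)
qed


lemma backward:
  fixes c0 :: nat and b :: "nat \<Rightarrow> complex"
  assumes bdd: "DPhi_bounded (Phi c0 b)"
    and H: "\<forall>s. Re s > \<sigma> \<longrightarrow> Phi c0 b s = s + of_real c1"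
  shows "DPhi_selfadjoint (Phi c0 b)"
proof -
  define \<Phi> where "\<Phi> = Phi c0 b"
  define r where "r n = - ln (real n) * real n powr (- c1)" for n :: nat
  have D: "DPhi \<Phi> f = (\<lambda>n. f n * of_real (r n))" if f: "f \<in> H2" for f
  proof -
    define G where "G = DPhi \<Phi> f"
    define h where "h n = f n * of_real (r n)" for n
    have GH2: "G \<in> H2" and Grep: "represents_DPhi \<Phi> f G"
      using DPhi_spec[OF bdd[folded \<Phi>_def] f] G_def by auto
    define B where "B = sqrt (\<Sum>n. (cmod (f n))\<^sup>2)"
    have fb: "\<forall>n\<ge>1. norm (f n) \<le> B" using H2_pb[OF f] unfolding B_def by simp
    have "norm (f 1) \<le> B" using fb by simp
    hence B0: "B \<ge> 0" by (rule order_trans[OF norm_ge_zero])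
    have pbh: "pb h" unfolding pb_def
    proof (intro exI allI impI)
      fix n :: nat assume n: "n \<ge> 1"
      have "norm (h n) = norm (f n) * (ln (real n) * real n powr (- c1))"
        using n unfolding h_def r_def by (simp add: norm_mult abs_mult)
      also have "\<dots> \<le> B * (real n * real n powr (- c1))"
        using n fb B0 by (intro mult_mono mult_right_mono) (auto intro: order_trans[OF ln_le_minus_one])
      also have "\<dots> = B * real n powr (1 - c1)"
        using n by (simp add: powr_add powr_diff powr_minus field_simps)
      finally show "norm (h n) \<le> B * real n powr (1 - c1)" .
    qed
    have ev: "eventually (\<lambda>s. dir_series G (of_real s) = dir_series h (of_real s)) at_top"
      using represents_ev[OF Grep] eventually_gt_at_top[of "max \<sigma> (3 - c1)"]
    proof eventually_elim
      case (elim s)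
      have "\<Phi> (of_real s) = of_real (s + c1)" using H elim unfolding \<Phi>_def by simp
      hence "dir_series G (of_real s) = deriv (dir_series f) (of_real (s + c1))" using elim by simp
      also have "\<dots> = (\<Sum>n. - f n * of_real (ln (real n)) * of_nat n powr (- of_real (s + c1)))"
        using elim by (intro deriv_dir[OF fb]) simp
      also have "\<dots> = dir_series h (of_real s)"
        unfolding dir_series_def
      proof (rule suminf_cong)
        fix n
        have "of_nat n powr (- of_real (s + c1)) = (of_real (real n powr (- c1) * real n powr (- s)) :: complex)"
          using cpow_real[of n "- (s + c1)"] by (simp add: powr_add[symmetric] algebra_simps)
        moreover have "(of_nat n :: complex) powr (- of_real s) = of_real (real n powr (- s))"
          using cpow_real[of n "- s"] by simp
        ultimately show "- f n * of_real (ln (real n)) * of_nat n powr (- of_real (s + c1))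
             = h n * of_nat n powr (- of_real s)"
          unfolding h_def r_def by (simp add: mult_ac)
      qed
      finally show ?case .
    qed
    have "\<forall>n\<ge>1. G n = h n" by (rule dir_unique[OF H2_pb'[OF GH2] pbh ev])
    moreover have "G 0 = 0" "h 0 = 0" using GH2 f by (auto simp: H2_def h_def)
    ultimately have "G = h" by (metis One_nat_def le_less_linear less_one ext)
    thus ?thesis unfolding G_def h_def .
  qed
  show ?thesis unfolding DPhi_selfadjoint_def \<Phi>_def[symmetric]
  proof (intro ballI)
    fix f g assume f: "f \<in> H2" and g: "g \<in> H2"
    show "h2_inner (DPhi \<Phi> f) g = h2_inner f (DPhi \<Phi> g)"
      unfolding D[OF f] D[OF g] h2_inner_def by (simp add: mult_ac)
  qed
qed

theorem theorem4p1:
  fixes c0 :: nat and b :: "nat \<Rightarrow> complex"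
  assumes "convergent_dirichlet b"
    and "DPhi_bounded (Phi c0 b)"
  shows "DPhi_selfadjoint (Phi c0 b) \<longleftrightarrow>
         (\<exists>c1::real. \<exists>\<sigma>::real. \<forall>s. Re s > \<sigma> \<longrightarrow> Phi c0 b s = s + of_real c1)"
  using forward[OF assms] backward[OF assms(2)] by blast


end
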